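(* Let $\Theta\subseteq\mathbb{R}^d$ be an open set equipped with a Riemannian metric $g$, let $V_1,\dots,V_N:\Theta\to\mathbb{R}$ and $f:\Theta\to\mathbb{R}$ be twice continuously differentiable, and fix $\vec\theta\in\Theta$. Let $C=\mathrm{Con}(\{\mathtt{grad}\,V_i(\vec\theta)\}_{i=1}^N)$ and assume its dual $C^\perp$ is nonempty. Then $\mathtt{grad}\,f(\vec\theta)\notin C$ if and only if there exists a direction $\delta\vec\theta\in\mathbb{R}^d$ such that $\mathscr{V}^i_{f,\delta\vec\theta}(\vec\theta)<0$ for all $i=1,\dots,N$.
   Context: Inner products are $\langle\vec v,\vec w\rangle=g_{ij}(\vec\theta)v^iw^j$ and the gradient is $(\mathtt{grad}\,h)^i=g^{ij}\partial h/\partial\theta^j$ with $g^{ij}$ the inverse of $g_{ij}$. For nonzero vectors $\vec v_1,\dots,\vec v_N$, the conic hull is $\mathrm{Con}(\{\vec v_i\})=\{\sum_i\alpha^i\vec v_i:\alpha^i\ge0\ \forall i\}$, and its dual is $\mathrm{Con}(\{\vec v_i\})^\perp=\{\vec v:\langle\vec v,\vec v_i\rangle<0\text{ for all }i\}$. The differential value to player $i$ of $f$ in direction $\delta\vec\theta$ at $\vec\theta$ is $\mathscr{V}^i_{f,\delta\vec\theta}(\vec\theta)=\dfrac{\langle\mathtt{grad}\,V_i(\vec\theta),\delta\vec\theta\rangle}{\langle\mathtt{grad}\,f(\vec\theta),\delta\vec\theta\rangle}=\dfrac{\partial_kV_i(\vec\theta)\,\delta\theta^k}{\partial_kf(\vec\theta)\,\delta\theta^k}$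 (here $V_i$ is interpreted as the equilibrium expected utility of player $i$ in a game with parameter $\vec\theta$). *)

theory Defs
  imports "HOL-Analysis.Analysis"
begin

definition C2_on :: "(real^'d \<Rightarrow> real) \<Rightarrow> (real^'d) set \<Rightarrow> bool" where
  "C2_on h S \<longleftrightarrow>
     (\<exists>(D1 :: real^'d \<Rightarrow> ((real^'d) \<Rightarrow>\<^sub>L real))
        (D2 :: real^'d \<Rightarrow> ((real^'d) \<Rightarrow>\<^sub>L ((real^'d) \<Rightarrow>\<^sub>L real))).
        (\<forall>x\<in>S. (h has_derivative blinfun_apply (D1 x)) (at x)) \<and>
        (\<forall>x\<in>S. (D1 has_derivative blinfun_apply (D2 x)) (at x)) \<and>
        continuous_on S D2)"

definition riemannian_metric :: "(real^'d \<Rightarrow> real^'d^'d) \<Rightarrow> (real^'d) set \<Rightarrow> bool" where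
  "riemannian_metric g S \<longleftrightarrow>
     continuous_on S g \<and>
     (\<forall>x\<in>S. transpose (g x) = g x \<and> (\<forall>v. v \<noteq> 0 \<longrightarrow> v \<bullet> (g x *v v) > 0))"

definition ginner :: "(real^'d \<Rightarrow> real^'d^'d) \<Rightarrow> real^'d \<Rightarrow> real^'d \<Rightarrow> real^'d \<Rightarrow> real" where
  "ginner g x v w = v \<bullet> (g x *v w)"

definition partials :: "(real^'d \<Rightarrow> real) \<Rightarrow> real^'d \<Rightarrow> real^'d" where
  "partials h x = (THE D. GDERIV h x :> D)"

definition rgrad :: "(real^'d \<Rightarrow> real^'d^'d) \<Rightarrow> (real^'d \<Rightarrow> real) \<Rightarrow> real^'d \<Rightarrow> real^'d" where
  "rgrad g h x = matrix_inv (g x) *v partials h x"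

definition Con :: "nat \<Rightarrow> (nat \<Rightarrow> real^'d) \<Rightarrow> (real^'d) set" where
  "Con N v = {u. \<exists>\<alpha>::nat \<Rightarrow> real. (\<forall>i<N. \<alpha> i \<ge> 0) \<and> u = (\<Sum>i<N. \<alpha> i *\<^sub>R v i)}"

definition Con_dual :: "(real^'d \<Rightarrow> real^'d^'d) \<Rightarrow> real^'d \<Rightarrow> nat \<Rightarrow> (nat \<Rightarrow> real^'d) \<Rightarrow> (real^'d) set" where
  "Con_dual g x N v = {u. \<forall>i<N. ginner g x u (v i) < 0}"

definition diff_value :: "(real^'d \<Rightarrow> real^'d^'d) \<Rightarrow> (real^'d \<Rightarrow> real) \<Rightarrow> (real^'d \<Rightarrow> real)
    \<Rightarrow> real^'d \<Rightarrow> real^'d \<Rightarrow> real" where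
  "diff_value g Vi f d x = ginner g x (rgrad g Vi x) d / ginner g x (rgrad g f x) d"

end

theory Submission
  imports Defs
begin

lemma Con_convex_cone: "convex_cone (Con N v)"
proof -
  have ne: "Con N v \<noteq> {}"
    unfolding Con_def by (rule ccontr) (auto dest: spec[of _ "\<lambda>_. 0"])
  have cv: "convex (Con N v)"
    unfolding convex_def Con_def
  proof (clarify)
    fix u :: real and w :: real and a b :: "nat \<Rightarrow> real"
    assume h: "0 \<le> u" "0 \<le> w" "u + w = 1" "\<forall>i<N. 0 \<le> a i" "\<forall>i<N. 0 \<le> b i"
    show "\<exists>\<alpha>. (\<forall>i<N. 0 \<le> \<alpha> i) \<and> u *\<^sub>R (\<Sum>i<N. a i *\<^sub>R v i) + w *\<^sub>R (\<Sum>i<N. b i *\<^sub>R v i) = (\<Sum>i<N. \<alpha> i *\<^sub>R v i)"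
      by (rule exI[of _ "\<lambda>i. u * a i + w * b i"])
         (use h in \<open>auto simp: scaleR_sum_right sum.distrib[symmetric] scaleR_add_left\<close>)
  qed
  have cn: "conic (Con N v)"
    unfolding conic_def Con_def
  proof (clarify)
    fix c :: real and a :: "nat \<Rightarrow> real"
    assume h: "0 \<le> c" "\<forall>i<N. 0 \<le> a i"
    show "\<exists>\<alpha>. (\<forall>i<N. 0 \<le> \<alpha> i) \<and> c *\<^sub>R (\<Sum>i<N. a i *\<^sub>R v i) = (\<Sum>i<N. \<alpha> i *\<^sub>R v i)"
      by (rule exI[of _ "\<lambda>i. c * a i"]) (use h in \<open>auto simp: scaleR_sum_right\<close>)
  qed
  show ?thesis using ne cv cn by (simp add: convex_cone_def)
qed

lemma Con_gen: assumes "i < N" shows "v i \<in> Con N v"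
proof -
  have "(\<Sum>j<N. (if j = i then 1 else 0) *\<^sub>R v j) = (\<Sum>j<N. if j = i then v j else 0)"
    by (rule sum.cong) auto
  also have "\<dots> = v i" using assms by (simp add: sum.delta')
  finally show ?thesis unfolding Con_def
    by (intro CollectI exI[of _ "\<lambda>j. if j = i then 1 else 0"]) auto
qed

lemma sep:
  fixes w :: "real^'d"
  assumes "w \<notin> Con N v"
  shows "\<exists>z. z \<bullet> w > 0 \<and> (\<forall>i<N. z \<bullet> v i \<le> 0)"
proof -
  let ?H = "convex_cone hull (v ` {..<N})"
  have sub: "?H \<subseteq> Con N v"
    by (rule hull_minimal) (use Con_gen Con_convex_cone in auto)
  have cc: "convex_cone ?H" by (simp add: convex_cone_convex_cone_hull)
  have "closed ?H" by (simp add: closed_convex_cone_hull)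
  moreover have "convex ?H" using cc by (simp add: convex_cone_def)
  moreover have "w \<notin> ?H" using sub assms by auto
  ultimately obtain a b where ab: "a \<bullet> w < b" "\<forall>x\<in>?H. a \<bullet> x > b"
    using separating_hyperplane_closed_point by blast
  have "0 \<in> ?H" by (simp add: convex_cone_hull_contains_0)
  with ab have b0: "b < 0" by auto
  have "a \<bullet> v i \<ge> 0" if "i < N" for i
  proof (rule ccontr)
    assume neg: "\<not> a \<bullet> v i \<ge> 0"
    have vi: "v i \<in> ?H" using that by (simp add: hull_inc)
    define t where "t = b / (a \<bullet> v i)"
    have t0: "t \<ge> 0" using neg b0 by (simp add: t_def divide_nonpos_neg)
    have "t *\<^sub>R v i \<in> ?H" using vi t0 by (rule convex_cone_hull_mul)
    hence "a \<bullet> (t *\<^sub>R v i) > b" using ab by auto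
    moreover have "a \<bullet> (t *\<^sub>R v i) = b" using neg by (simp add: t_def)
    ultimately show False by simp
  qed
  thus ?thesis using ab b0 by (intro exI[of _ "-a"]) auto
qed

theorem proposition3:
  fixes \<Theta> :: "(real^'d) set"
    and g :: "real^'d \<Rightarrow> real^'d^'d"
    and V :: "nat \<Rightarrow> real^'d \<Rightarrow> real"
    and f :: "real^'d \<Rightarrow> real"
    and N :: nat
    and \<theta> :: "real^'d"
  assumes "open \<Theta>"
    and "riemannian_metric g \<Theta>"
    and "N \<ge> 1"
    and "\<And>i. i < N \<Longrightarrow> C2_on (V i) \<Theta>"
    and "C2_on f \<Theta>"
    and "\<theta> \<in> \<Theta>"
    and "Con_dual g \<theta> N (\<lambda>i. rgrad g (V i) \<theta>) \<noteq> {}"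
  shows "rgrad g f \<theta> \<notin> Con N (\<lambda>i. rgrad g (V i) \<theta>) \<longleftrightarrow>
         (\<exists>d::real^'d. \<forall>i<N. diff_value g (V i) f d \<theta> < 0)"
proof -
  define G where "G = g \<theta>"
  define v where "v = (\<lambda>i. rgrad g (V i) \<theta>)"
  define w where "w = rgrad g f \<theta>"
  have sym: "transpose G = G" and pd: "\<And>x. x \<noteq> 0 \<Longrightarrow> x \<bullet> (G *v x) > 0"
    using assms(2,6) unfolding riemannian_metric_def G_def by auto
  have swap: "x \<bullet> (G *v y) = y \<bullet> (G *v x)" for x y
  proof -
    have "x \<bullet> (G *v y) = (x v* G) \<bullet> y" by (simp add: dot_lmul_matrix)
    also have "x v* G = transpose G *v x" by (simp add: transpose_matrix_vector)
    finally show ?thesis using sym by (simp add: inner_commute)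
  qed
  have dv: "diff_value g (V i) f d \<theta> = (v i \<bullet> (G *v d)) / (w \<bullet> (G *v d))" for i d
    by (simp add: diff_value_def ginner_def v_def w_def G_def)
  obtain u where u: "\<And>i. i < N \<Longrightarrow> v i \<bullet> (G *v u) < 0"
    using assms(7) swap unfolding Con_dual_def ginner_def v_def G_def by auto
  show ?thesis unfolding dv v_def[symmetric] w_def[symmetric]
  proof
    assume "w \<notin> Con N v"
    then obtain z where z: "z \<bullet> w > 0" "\<And>i. i < N \<Longrightarrow> z \<bullet> v i \<le> 0"
      using sep by blast
    have "\<forall>x. G *v x = 0 \<longrightarrow> x = 0" using pd by force
    then obtain B where "B ** G = mat 1" using matrix_left_invertible_ker by blast
    hence GB: "G ** B = mat 1" using matrix_left_right_inverse by blast
    define d0 where "d0 = B *v z"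
    have Gd0: "G *v d0 = z" by (simp add: d0_def matrix_vector_mul_assoc GB)
    define c where "c = w \<bullet> (G *v u)"
    define e where "e = (z \<bullet> w) / (2 * (\<bar>c\<bar> + 1))"
    have e0: "e > 0" using z by (simp add: e_def)
    have "e * \<bar>c\<bar> < z \<bullet> w"
    proof -
      have "e * \<bar>c\<bar> \<le> e * (\<bar>c\<bar> + 1)" using e0 by simp
      also have "\<dots> = (z \<bullet> w) / 2" proof - have "\<bar>c\<bar> + 1 > 0" by simp thus ?thesis unfolding e_def by (simp add: field_simps) qed
      finally show ?thesis using z by simp
    qed
    define d where "d = d0 + e *\<^sub>R u"
    have Gd: "G *v d = z + e *\<^sub>R (G *v u)"
      by (simp add: d_def matrix_vector_right_distrib Gd0 matrix_vector_mult_scaleR)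
    have pos: "w \<bullet> (G *v d) > 0"
    proof -
      have "w \<bullet> (G *v d) = z \<bullet> w + e * c" by (simp add: Gd c_def inner_add_right inner_commute)
      moreover have "e * c \<ge> - (e * \<bar>c\<bar>)" using e0 by (simp add: abs_if)
      ultimately show ?thesis using \<open>e * \<bar>c\<bar> < z \<bullet> w\<close> by linarith
    qed
    have "v i \<bullet> (G *v d) / (w \<bullet> (G *v d)) < 0" if "i < N" for i
    proof -
      have "v i \<bullet> (G *v d) = z \<bullet> v i + e * (v i \<bullet> (G *v u))"
        by (simp add: Gd inner_add_right inner_commute)
      moreover have "e * (v i \<bullet> (G *v u)) < 0" using e0 u[OF that] by (simp add: mult_pos_neg)
      ultimately have "v i \<bullet> (G *v d) < 0" using z(2)[OF that] by linarith
      thus ?thesis using pos by (simp add: divide_neg_pos)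
    qed
    thus "\<exists>d. \<forall>i<N. v i \<bullet> (G *v d) / (w \<bullet> (G *v d)) < 0" by blast
  next
    assume "\<exists>d. \<forall>i<N. v i \<bullet> (G *v d) / (w \<bullet> (G *v d)) < 0"
    then obtain d where d: "\<And>i. i < N \<Longrightarrow> v i \<bullet> (G *v d) / (w \<bullet> (G *v d)) < 0" by blast
    define c where "c = w \<bullet> (G *v d)"
    have ai: "(v i \<bullet> (G *v d)) * c < 0" if "i < N" for i
    proof -
      have "(v i \<bullet> (G *v d)) / c < 0" using d[OF that] by (simp add: c_def)
      hence "(v i \<bullet> (G *v d)) / c * (c * c) < 0"
        by (metis mult_neg_pos divide_eq_0_iff not_square_less_zero linorder_neqE_linordered_idom
              zero_less_mult_iff less_irrefl)
      moreover have "c \<noteq> 0" using d[OF that] c_def by auto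
      ultimately show ?thesis by (simp add: field_simps power2_eq_square)
    qed
    have c0: "c \<noteq> 0" using d[of 0] assms(3) by (auto simp: c_def)
    show "w \<notin> Con N v"
    proof
      assume "w \<in> Con N v"
      then obtain \<alpha> where al: "\<forall>i<N. \<alpha> i \<ge> 0" "w = (\<Sum>i<N. \<alpha> i *\<^sub>R v i)"
        unfolding Con_def by blast
      have "c * c = (\<Sum>i<N. \<alpha> i * ((v i \<bullet> (G *v d)) * c))"
        by (simp add: c_def al(2) inner_sum_left sum_distrib_right mult.assoc)
      also have "\<dots> \<le> 0"
        by (rule sum_nonpos) (use al(1) ai in \<open>auto intro: mult_nonneg_nonpos less_imp_le\<close>)
      finally show False using c0 by (metis not_real_square_gt_zero linorder_not_le)
    qed
  qed
qed

end
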